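(* For every oriented diagram $D$ with double lines of degree $0$, $pr_{wp}(pr_{wp}(D))=pr_{wp}(D)$.
   Context: A diagram with double lines (representing a knot in $S_g\times S^1$, $S_g$ a closed oriented surface) is a virtual knot diagram in the plane decorated by finitely many double lines, marks on the curve away from crossings recording where the knot meets a fixed level $S_g\times\{x_0\}$; for an oriented diagram each double line has a sign $\pm1$ according to the direction in which the knot passes through that level. The degree is the sum of the signs of all double lines. For a classical crossing $c$, $\gamma_c$ is the closed path following the oriented curve from $c$, leaving along the under-strand, until it first returns to $c$; the winding parity of $c$ is the sum of the signs of the double lines on $\gamma_c$ (an integer in degree $0$). For a degree-$0$ diagram $D$, $pr_{wp}(D)$ is obtained as follows: for each classical crossing $c$ with winding parity $i$, if $i\ge0$ keep $c$ and put $j=i$; if $i<0$ switch over/under at $c$ and put $j=-i$; then on the under-strand of the resulting crossing insert $j$ double lines of sign $-1$ immediately after $c$ and $j$ double lines of sign $+1$ immediately before $c$. *)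

theory Defs
  imports Main
begin

text \<open>Combinatorial model (Gauss diagram) of an oriented virtual knot diagram with
double lines.  The oriented curve, read from a base point, is a list of events:
a passage through classical crossing c, either along the over-strand
(Cr c True) or along the under-strand (Cr c False), or a double line with sign
+1 (DL True) or -1 (DL False).\<close>

datatype ev = Cr nat bool | DL bool

record diagram =
  word :: "ev list"
  csign :: "nat \<Rightarrow> int"

definition crossings :: "diagram \<Rightarrow> nat set" where
  "crossings D = {c. Cr c True \<in> set (word D) \<or> Cr c False \<in> set (word D)}"

definition wf_diagram :: "diagram \<Rightarrow> bool" where
  "wf_diagram D \<longleftrightarrow>
     (\<forall>c\<in>crossings D. count_list (word D) (Cr c True) = 1
                     \<and> count_list (word D) (Cr c False) = 1
                     \<and> csign D c \<in> {-1, 1})"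

fun dlsign :: "ev \<Rightarrow> int" where
  "dlsign (DL b) = (if b then 1 else -1)"
| "dlsign (Cr _ _) = 0"

definition degree :: "diagram \<Rightarrow> int" where
  "degree D = sum_list (map dlsign (word D))"

text \<open>gamma_c: the events strictly after the under-passage of c up to (excluding)
the next passage through c, i.e. the over-passage (cyclically).\<close>
definition gamma :: "ev list \<Rightarrow> nat \<Rightarrow> ev list" where
  "gamma w c =
     (let r = dropWhile (\<lambda>e. e \<noteq> Cr c False) w @ takeWhile (\<lambda>e. e \<noteq> Cr c False) w
      in takeWhile (\<lambda>e. e \<noteq> Cr c True) (tl r))"

definition winding_parity :: "diagram \<Rightarrow> nat \<Rightarrow> int" where
  "winding_parity D c = sum_list (map dlsign (gamma (word D) c))"

definition pr_wp_ev :: "diagram \<Rightarrow> ev \<Rightarrow> ev list" where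
  "pr_wp_ev D e = (case e of
       DL b \<Rightarrow> [DL b]
     | Cr c b \<Rightarrow>
         (let i = winding_parity D c;
              b' = (if i \<ge> 0 then b else \<not> b);
              j = nat \<bar>i\<bar>
          in if b' then [Cr c b']
             else replicate j (DL True) @ [Cr c b'] @ replicate j (DL False)))"

definition pr_wp :: "diagram \<Rightarrow> diagram" where
  "pr_wp D = \<lparr> word = concat (map (pr_wp_ev D) (word D)),
               csign = (\<lambda>c. if c \<in> crossings D \<and> winding_parity D c < 0 then - csign D c else csign D c) \<rparr>"

end

theory Submission
  imports Defs
begin

lemma tw_lem: "x \<notin> set B \<Longrightarrow> takeWhile (\<lambda>e. e \<noteq> x) (B @ x # C) = B"
  by (induction B) auto
lemma tw_lem2: "x \<notin> set B \<Longrightarrow> takeWhile (\<lambda>e. e \<noteq> x) B = B"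
  by (induction B) auto
lemma dw_lem: "x \<notin> set B \<Longrightarrow> dropWhile (\<lambda>e. e \<noteq> x) (B @ x # C) = x # C"
  by (induction B) auto

definition nc :: "nat \<Rightarrow> ev list \<Rightarrow> bool" where
  "nc c s \<longleftrightarrow> Cr c True \<notin> set s \<and> Cr c False \<notin> set s"

lemma gamma_app:
  assumes "Cr c False \<notin> set A"
  shows "gamma (A @ Cr c False # B) c = takeWhile (\<lambda>e. e \<noteq> Cr c True) (B @ A)"
proof -
  have "dropWhile (\<lambda>e. e \<noteq> Cr c False) (A @ Cr c False # B) = Cr c False # B"
    using assms by (rule dw_lem)
  moreover have "takeWhile (\<lambda>e. e \<noteq> Cr c False) (A @ Cr c False # B) = A"
    by (rule tw_lem[OF assms])
  ultimately show ?thesis unfolding gamma_def Let_def by simp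
qed

lemma gamma1:
  assumes "Cr c False \<notin> set A" "Cr c True \<notin> set B"
  shows "gamma (A @ Cr c False # B @ Cr c True # C) c = B"
  using assms by (simp add: gamma_app tw_lem)

lemma gamma2:
  assumes "Cr c False \<notin> set A" "Cr c False \<notin> set B" "Cr c True \<notin> set C" "Cr c True \<notin> set A"
  shows "gamma (A @ Cr c True # B @ Cr c False # C) c = C @ A"
proof -
  have "gamma ((A @ Cr c True # B) @ Cr c False # C) c
     = takeWhile (\<lambda>e. e \<noteq> Cr c True) (C @ A @ Cr c True # B)"
    by (rule gamma_app) (use assms in auto)
  then have "gamma (A @ Cr c True # B @ Cr c False # C) c
     = takeWhile (\<lambda>e. e \<noteq> Cr c True) (C @ A @ Cr c True # B)" by simp
  also have "\<dots> = C @ A" using assms tw_lem[of "Cr c True" "C @ A"] by simp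
  finally show ?thesis .
qed

lemma split_once:
  assumes "count_list w x = 1"
  shows "\<exists>a b. w = a @ x # b \<and> x \<notin> set a \<and> x \<notin> set b"
proof -
  have "x \<in> set w" using assms by (metis count_list_0_iff zero_neq_one)
  then obtain a b where w: "w = a @ x # b" "x \<notin> set a" by (metis split_list_first)
  then have "count_list b x = 0" using assms by (simp add: count_list_0_iff)
  then have "x \<notin> set b" by (simp add: count_list_0_iff)
  then show ?thesis using w by blast
qed

lemma decomp:
  assumes "wf_diagram D" "c \<in> crossings D"
  shows "(\<exists>a p q. word D = a @ Cr c False # p @ Cr c True # q \<and> nc c a \<and> nc c p \<and> nc c q)
       \<or> (\<exists>q p' p. word D = q @ Cr c True # p' @ Cr c False # p \<and> nc c q \<and> nc c p' \<and> nc c p)"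
proof -
  have cU: "count_list (word D) (Cr c False) = 1" and cO: "count_list (word D) (Cr c True) = 1"
    using assms unfolding wf_diagram_def by auto
  obtain a b where ab: "word D = a @ Cr c False # b" "Cr c False \<notin> set a" "Cr c False \<notin> set b"
    using split_once[OF cU] by blast
  have "count_list a (Cr c True) + count_list b (Cr c True) = 1" using cO ab by simp
  then consider "count_list a (Cr c True) = 0" "count_list b (Cr c True) = 1"
    | "count_list a (Cr c True) = 1" "count_list b (Cr c True) = 0" by linarith
  then show ?thesis
  proof cases
    case 1
    obtain p q where pq: "b = p @ Cr c True # q" "Cr c True \<notin> set p" "Cr c True \<notin> set q"
      using split_once[OF 1(2)] by blast
    have aO: "Cr c True \<notin> set a" using 1(1) by (simp add: count_list_0_iff)
    have e: "word D = a @ Cr c False # p @ Cr c True # q" using ab(1) pq(1) by simp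
    have n: "nc c a" "nc c p" "nc c q" using ab(2,3) pq aO unfolding nc_def by auto
    show ?thesis by (rule disjI1, rule exI[of _ a], rule exI[of _ p], rule exI[of _ q]) (simp add: e n)
  next
    case 2
    obtain q p' where pq: "a = q @ Cr c True # p'" "Cr c True \<notin> set q" "Cr c True \<notin> set p'"
      using split_once[OF 2(1)] by blast
    have bO: "Cr c True \<notin> set b" using 2(2) by (simp add: count_list_0_iff)
    have e: "word D = q @ Cr c True # p' @ Cr c False # b" using ab(1) pq(1) by simp
    have n: "nc c q" "nc c p'" "nc c b" using ab(2,3) pq bO unfolding nc_def by auto
    show ?thesis by (rule disjI2, rule exI[of _ q], rule exI[of _ p'], rule exI[of _ b]) (simp add: e n)
  qed
qed

abbreviation sm :: "ev list \<Rightarrow> int" where "sm s \<equiv> sum_list (map dlsign s)"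

lemma sm_f: "sm (pr_wp_ev D e) = dlsign e"
  by (cases e) (auto simp: pr_wp_ev_def Let_def sum_list_replicate)

lemma sm_F: "sm (concat (map (pr_wp_ev D) s)) = sm s"
  by (induction s) (auto simp: sm_f)

lemma mem_f: "Cr c b \<in> set (pr_wp_ev D e) \<Longrightarrow> \<exists>b'. e = Cr c b'"
  by (cases e) (auto simp: pr_wp_ev_def Let_def split: if_splits)

lemma mem_F: "Cr c b \<in> set (concat (map (pr_wp_ev D) s)) \<Longrightarrow> \<exists>b'. Cr c b' \<in> set s"
  using mem_f by fastforce

lemma nc_F: "nc c s \<Longrightarrow> nc c (concat (map (pr_wp_ev D) s))"
  unfolding nc_def by (metis (full_types) mem_F)

lemma fU_pos: "winding_parity D c \<ge> 0 \<Longrightarrow> pr_wp_ev D (Cr c False) =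
   replicate (nat \<bar>winding_parity D c\<bar>) (DL True) @ [Cr c False] @ replicate (nat \<bar>winding_parity D c\<bar>) (DL False)"
  by (simp add: pr_wp_ev_def Let_def)
lemma fO_pos: "winding_parity D c \<ge> 0 \<Longrightarrow> pr_wp_ev D (Cr c True) = [Cr c True]"
  by (simp add: pr_wp_ev_def Let_def)
lemma fU_neg: "winding_parity D c < 0 \<Longrightarrow> pr_wp_ev D (Cr c False) = [Cr c True]"
  by (simp add: pr_wp_ev_def Let_def)
lemma fO_neg: "winding_parity D c < 0 \<Longrightarrow> pr_wp_ev D (Cr c True) =
   replicate (nat \<bar>winding_parity D c\<bar>) (DL True) @ [Cr c False] @ replicate (nat \<bar>winding_parity D c\<bar>) (DL False)"
  by (simp add: pr_wp_ev_def Let_def)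

lemma sm_rep: "sm (replicate j (DL False)) = - int j" "sm (replicate j (DL True)) = int j"
  by (simp_all add: sum_list_replicate)

lemma wp_zero:
  assumes wf: "wf_diagram D" and deg: "degree D = 0" and c: "c \<in> crossings D"
  shows "winding_parity (pr_wp D) c = 0"
proof -
  let ?F = "\<lambda>s. concat (map (pr_wp_ev D) s)"
  let ?i = "winding_parity D c"
  let ?j = "nat \<bar>?i\<bar>"
  let ?U = "Cr c False" and ?O = "Cr c True"
  have W: "word (pr_wp D) = ?F (word D)" by (simp add: pr_wp_def)
  have s0: "sm (word D) = 0" using deg by (simp add: degree_def)
  from decomp[OF wf c] show ?thesis
  proof
    assume "\<exists>a p q. word D = a @ ?U # p @ ?O # q \<and> nc c a \<and> nc c p \<and> nc c q"
    then obtain a p q where w: "word D = a @ ?U # p @ ?O # q" and n: "nc c a" "nc c p" "nc c q" by blast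
    have i: "?i = sm p" unfolding winding_parity_def w using n by (simp add: gamma1 nc_def)
    have sq: "sm a + sm p + sm q = 0" using s0 w by simp
    have nF: "nc c (?F a)" "nc c (?F p)" "nc c (?F q)" using n nc_F by blast+
    show ?thesis
    proof (cases "?i \<ge> 0")
      case True
      have eqW: "word (pr_wp D) = (?F a @ replicate ?j (DL True)) @ ?U # (replicate ?j (DL False) @ ?F p) @ ?O # ?F q"
        using W w True by (simp add: fU_pos fO_pos)
      have g: "gamma (word (pr_wp D)) c = replicate ?j (DL False) @ ?F p"
        unfolding eqW by (rule gamma1) (use nF in \<open>auto simp: nc_def\<close>)
      then have "winding_parity (pr_wp D) c = - int ?j + sm p"
        unfolding winding_parity_def[of "pr_wp D" c] g map_append sum_list_append sm_rep sm_F by simp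
      then show ?thesis using True i by simp
    next
      case False
      have eqW: "word (pr_wp D) = ?F a @ ?O # (?F p @ replicate ?j (DL True)) @ ?U # (replicate ?j (DL False) @ ?F q)"
        using W w False by (simp add: fU_neg fO_neg)
      have g: "gamma (word (pr_wp D)) c = (replicate ?j (DL False) @ ?F q) @ ?F a"
        unfolding eqW by (rule gamma2) (use nF in \<open>auto simp: nc_def\<close>)
      then have "winding_parity (pr_wp D) c = - int ?j + sm q + sm a"
        unfolding winding_parity_def[of "pr_wp D" c] g map_append sum_list_append sm_rep sm_F by simp
      then show ?thesis using False i sq by simp
    qed
  next
    assume "\<exists>q p' p. word D = q @ ?O # p' @ ?U # p \<and> nc c q \<and> nc c p' \<and> nc c p"
    then obtain q p' p where w: "word D = q @ ?O # p' @ ?U # p" and n: "nc c q" "nc c p'" "nc c p" by blast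
    have i: "?i = sm p + sm q" unfolding winding_parity_def w using n by (simp add: gamma2 nc_def)
    have sq: "sm q + sm p' + sm p = 0" using s0 w by simp
    have nF: "nc c (?F q)" "nc c (?F p')" "nc c (?F p)" using n nc_F by blast+
    show ?thesis
    proof (cases "?i \<ge> 0")
      case True
      have eqW: "word (pr_wp D) = ?F q @ ?O # (?F p' @ replicate ?j (DL True)) @ ?U # (replicate ?j (DL False) @ ?F p)"
        using W w True by (simp add: fU_pos fO_pos)
      have g: "gamma (word (pr_wp D)) c = (replicate ?j (DL False) @ ?F p) @ ?F q"
        unfolding eqW by (rule gamma2) (use nF in \<open>auto simp: nc_def\<close>)
      then have "winding_parity (pr_wp D) c = - int ?j + sm p + sm q"
        unfolding winding_parity_def[of "pr_wp D" c] g map_append sum_list_append sm_rep sm_F by simp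
      then show ?thesis using True i by simp
    next
      case False
      have eqW: "word (pr_wp D) = (?F q @ replicate ?j (DL True)) @ ?U # (replicate ?j (DL False) @ ?F p') @ ?O # ?F p"
        using W w False by (simp add: fU_neg fO_neg)
      have g: "gamma (word (pr_wp D)) c = replicate ?j (DL False) @ ?F p'"
        unfolding eqW by (rule gamma1) (use nF in \<open>auto simp: nc_def\<close>)
      then have "winding_parity (pr_wp D) c = - int ?j + sm p'"
        unfolding winding_parity_def[of "pr_wp D" c] g map_append sum_list_append sm_rep sm_F by simp
      then show ?thesis using False i sq by simp
    qed
  qed
qed

lemma cross_sub: "c \<in> crossings (pr_wp D) \<Longrightarrow> c \<in> crossings D"
proof -
  assume "c \<in> crossings (pr_wp D)"
  then obtain b where "Cr c b \<in> set (concat (map (pr_wp_ev D) (word D)))"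
    unfolding crossings_def pr_wp_def by auto
  then obtain b' where "Cr c b' \<in> set (word D)" using mem_F by blast
  then show "c \<in> crossings D" unfolding crossings_def by (cases b') auto
qed

theorem mainTheorem3:
  assumes "wf_diagram D" and "degree D = 0"
  shows "pr_wp (pr_wp D) = pr_wp D"
proof -
  let ?D = "pr_wp D"
  have z: "\<And>c. c \<in> crossings ?D \<Longrightarrow> winding_parity ?D c = 0"
    using wp_zero[OF assms] cross_sub by blast
  have e: "pr_wp_ev ?D e = [e]" if "e \<in> set (word ?D)" for e
  proof (cases e)
    case (Cr c b)
    then have "c \<in> crossings ?D" using that unfolding crossings_def by (cases b) auto
    then show ?thesis using z Cr by (simp add: pr_wp_ev_def Let_def)
  qed (simp add: pr_wp_ev_def)
  have "concat (map (pr_wp_ev ?D) (word ?D)) = concat (map (\<lambda>e. [e]) (word ?D))"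
    using e by (metis map_eq_conv)
  then have w: "concat (map (pr_wp_ev ?D) (word ?D)) = word ?D" by simp
  have cs: "(\<lambda>c. if c \<in> crossings ?D \<and> winding_parity ?D c < 0 then - csign ?D c else csign ?D c) = csign ?D"
  proof (rule ext)
    fix c show "(if c \<in> crossings ?D \<and> winding_parity ?D c < 0 then - csign ?D c else csign ?D c) = csign ?D c"
      by (cases "c \<in> crossings ?D") (simp_all add: z)
  qed
  show ?thesis unfolding pr_wp_def[of ?D] w cs by simp
qed

end
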